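(* Let $\mathcal{X}\subseteq\mathbb{R}^d$ be closed and convex and $f:\mathcal{X}\to\mathbb{R}$ convex and continuously differentiable. Let $\alpha,\beta:\mathbb{R}\to\mathbb{R}$ be smooth with $0<\dot\beta_t\le e^{\alpha_t}$ for all $t$. Suppose $t\mapsto X_t\in\mathcal{X}$ is differentiable and $Z_t:=X_t+\dot\beta_t^{-1}\dot X_t$ satisfies $\langle\nabla f(X_t),x-Z_t\rangle\ge0$ for all $x\in\mathcal{X}$ and all $t$. Then for every $x\in\mathcal{X}$, the function $\mathcal{E}_t=e^{\beta_t}\big(f(X_t)-f(x)\big)$ is nonincreasing in $t$; in particular, if $x^\ast$ minimizes $f$ over $\mathcal{X}$, then $f(X_t)-f(x^\ast)\le e^{\beta_0-\beta_t}\big(f(X_0)-f(x^\ast)\big)$ for $t\ge0$. *)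

theory Defs
  imports "HOL-Analysis.Analysis"
begin

definition smooth_real :: "(real \<Rightarrow> real) \<Rightarrow> bool" where
  "smooth_real g \<longleftrightarrow> (\<forall>n t. ((deriv ^^ n) g) differentiable (at t))"

end

theory Submission
  imports Defs
begin

lemma grad_ineq:
  fixes S :: "'a::euclidean_space set" and f :: "'a \<Rightarrow> real" and gradf :: "'a \<Rightarrow> 'a"
  assumes cS: "convex S" and cf: "convex_on S f"
    and df: "\<And>y. y \<in> S \<Longrightarrow> (f has_derivative (\<lambda>h. gradf y \<bullet> h)) (at y within S)"
    and x: "x \<in> S" and y: "y \<in> S"
  shows "f y + gradf y \<bullet> (x - y) \<le> f x"
proof -
  define g where "g u = f (y + u *\<^sub>R (x - y))" for u :: real
  have img: "(\<lambda>u. y + u *\<^sub>R (x - y)) ` {0..1} \<subseteq> S"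
  proof
    fix z assume "z \<in> (\<lambda>u. y + u *\<^sub>R (x - y)) ` {0..1}"
    then obtain u where u: "u \<in> {0..1}" "z = y + u *\<^sub>R (x - y)" by auto
    have "z = (1 - u) *\<^sub>R y + u *\<^sub>R x" using u by (simp add: algebra_simps)
    then show "z \<in> S" using cS x y u by (auto intro: convexD)
  qed
  have pd: "((\<lambda>u. y + u *\<^sub>R (x - y)) has_derivative (\<lambda>h. h *\<^sub>R (x - y))) (at 0 within {0..1})"
    by (auto intro!: derivative_eq_intros)
  have "(g has_derivative (\<lambda>h. gradf (y + 0 *\<^sub>R (x - y)) \<bullet> (h *\<^sub>R (x - y)))) (at 0 within {0..1})"
    unfolding g_def by (rule has_derivative_in_compose2[OF df img _ pd]) auto
  hence "(g has_real_derivative (gradf y \<bullet> (x - y))) (at 0 within {0..1})"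
    unfolding has_field_derivative_def
  proof -
    assume h: "(g has_derivative (\<lambda>h. gradf (y + 0 *\<^sub>R (x - y)) \<bullet> (h *\<^sub>R (x - y)))) (at 0 within {0..1})"
    have "(\<lambda>h. gradf (y + 0 *\<^sub>R (x - y)) \<bullet> (h *\<^sub>R (x - y))) = (*) (gradf y \<bullet> (x - y))"
      by (rule ext) simp
    with h show "(g has_derivative (*) (gradf y \<bullet> (x - y))) (at 0 within {0..1})" by simp
  qed
  hence lim: "((\<lambda>u. (g u - g 0) / (u - 0)) \<longlongrightarrow> gradf y \<bullet> (x - y)) (at 0 within {0..1})"
    using has_field_derivative_iff by blast
  have ev: "eventually (\<lambda>u. (g u - g 0) / (u - 0) \<le> f x - f y) (at 0 within {0..1})"
    unfolding eventually_at_filter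
  proof (intro always_eventually allI impI)
    fix u :: real assume "u \<noteq> 0" and "u \<in> {0..1}"
    hence u: "0 < u" "u \<le> 1" by auto
    have "y + u *\<^sub>R (x - y) = (1 - u) *\<^sub>R y + u *\<^sub>R x" by (simp add: algebra_simps)
    hence "g u \<le> (1 - u) * f y + u * f x" unfolding g_def
      using convex_onD[OF cf, of u y x] u x y by simp
    hence "g u - g 0 \<le> u * (f x - f y)" by (simp add: g_def algebra_simps)
    thus "(g u - g 0) / (u - 0) \<le> f x - f y" using u by (simp add: divide_simps mult.commute)
  qed
  have "at (0::real) within {0..1} \<noteq> bot"
    by (simp add: at_within_Icc_at_right)
  from tendsto_upperbound[OF lim ev this] show ?thesis by simp
qed


theorem proposition9:
  fixes S :: "'a::euclidean_space set"
    and f :: "'a \<Rightarrow> real"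
    and gradf :: "'a \<Rightarrow> 'a"
    and \<alpha> \<beta> :: "real \<Rightarrow> real"
    and X :: "real \<Rightarrow> 'a"
  assumes "closed S" and "convex S"
    and "convex_on S f"
    and "\<And>y. y \<in> S \<Longrightarrow> (f has_derivative (\<lambda>h. gradf y \<bullet> h)) (at y within S)"
    and "continuous_on S gradf"
    and "smooth_real \<alpha>" and "smooth_real \<beta>"
    and "\<And>t. 0 < deriv \<beta> t" and "\<And>t. deriv \<beta> t \<le> exp (\<alpha> t)"
    and "\<And>t. X t \<in> S"
    and "\<And>t. X differentiable (at t)"
    and "\<And>t x. x \<in> S \<Longrightarrow>
           gradf (X t) \<bullet> (x - (X t + (1 / deriv \<beta> t) *\<^sub>R vector_derivative X (at t))) \<ge> 0"
  shows "(\<forall>x\<in>S. \<forall>s t. s \<le> t \<longrightarrow>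
            exp (\<beta> t) * (f (X t) - f x) \<le> exp (\<beta> s) * (f (X s) - f x))
       \<and> (\<forall>xs\<in>S. (\<forall>x\<in>S. f xs \<le> f x) \<longrightarrow>
            (\<forall>t\<ge>0. f (X t) - f xs \<le> exp (\<beta> 0 - \<beta> t) * (f (X 0) - f xs)))"
proof -
  note cS = assms(2) and cf = assms(3) and df = assms(4) and bpos = assms(8)
    and XS = assms(10) and Xd = assms(11) and hyp = assms(12)
  have bd: "(\<beta> has_real_derivative deriv \<beta> t) (at t)" for t
    using assms(7) unfolding smooth_real_def DERIV_deriv_iff_real_differentiable
    by (metis funpow_0)
  define V where "V t = vector_derivative X (at t)" for t
  have Xv: "(X has_derivative (\<lambda>h. h *\<^sub>R V t)) (at t)" for t
    using vector_derivative_works[THEN iffD1, OF Xd[of t]]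
    unfolding V_def has_vector_derivative_def by simp
  have fX: "((\<lambda>t. f (X t)) has_real_derivative (gradf (X t) \<bullet> V t)) (at t)" for t
  proof -
    have "((\<lambda>t. f (X t)) has_derivative (\<lambda>h. gradf (X t) \<bullet> (h *\<^sub>R V t))) (at t within UNIV)"
      by (rule has_derivative_in_compose2[OF df _ _ Xv[of t]]) (use XS in auto)
    moreover have "(\<lambda>h. gradf (X t) \<bullet> (h *\<^sub>R V t)) = (*) (gradf (X t) \<bullet> V t)"
      by (rule ext) (simp add: mult.commute)
    ultimately show ?thesis unfolding has_field_derivative_def by simp
  qed
  have mono: "exp (\<beta> t) * (f (X t) - f x) \<le> exp (\<beta> s) * (f (X s) - f x)"
    if x: "x \<in> S" and st: "s \<le> t" for x s t
  proof (rule DERIV_nonpos_imp_nonincreasing[OF st, of "\<lambda>t. exp (\<beta> t) * (f (X t) - f x)"])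
    fix u assume "s \<le> u" "u \<le> t"
    let ?D = "exp (\<beta> u) * deriv \<beta> u * (f (X u) - f x) + exp (\<beta> u) * (gradf (X u) \<bullet> V u)"
    have "((\<lambda>t. exp (\<beta> t) * (f (X t) - f x)) has_real_derivative ?D) (at u)"
      by (auto intro!: derivative_eq_intros bd fX simp: algebra_simps)
    moreover have "?D \<le> 0"
    proof -
      have g: "f (X u) + gradf (X u) \<bullet> (x - X u) \<le> f x"
        by (rule grad_ineq[OF cS cf df x XS])
      have h: "gradf (X u) \<bullet> (x - (X u + (1 / deriv \<beta> u) *\<^sub>R V u)) \<ge> 0"
        using hyp[OF x] unfolding V_def by blast
      have bp: "deriv \<beta> u > 0" by (rule bpos)
      have "gradf (X u) \<bullet> V u \<le> deriv \<beta> u * (gradf (X u) \<bullet> (x - X u))"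
      proof -
        from h have "(1 / deriv \<beta> u) * (gradf (X u) \<bullet> V u) \<le> gradf (X u) \<bullet> (x - X u)"
          by (simp add: inner_diff_right inner_add_right)
        hence "deriv \<beta> u * ((1 / deriv \<beta> u) * (gradf (X u) \<bullet> V u)) \<le> deriv \<beta> u * (gradf (X u) \<bullet> (x - X u))"
          using bp by (intro mult_left_mono) auto
        thus ?thesis using bp by simp
      qed
      also have "\<dots> \<le> deriv \<beta> u * (f x - f (X u))"
        using g bp by (intro mult_left_mono) auto
      finally have "deriv \<beta> u * (f (X u) - f x) + gradf (X u) \<bullet> V u \<le> 0"
        by (simp add: algebra_simps)
      hence "exp (\<beta> u) * (deriv \<beta> u * (f (X u) - f x) + gradf (X u) \<bullet> V u) \<le> 0"
        by (simp add: mult_nonneg_nonpos)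
      thus ?thesis by (simp add: algebra_simps)
    qed
    ultimately show "\<exists>y. ((\<lambda>t. exp (\<beta> t) * (f (X t) - f x)) has_real_derivative y) (at u) \<and> y \<le> 0"
      by blast
  qed
  show ?thesis
  proof (intro conjI ballI allI impI)
    fix x s t assume "x \<in> S" "s \<le> (t::real)"
    thus "exp (\<beta> t) * (f (X t) - f x) \<le> exp (\<beta> s) * (f (X s) - f x)" by (rule mono)
  next
    fix xs t assume xs: "xs \<in> S" and "\<forall>x\<in>S. f xs \<le> f x" and t: "0 \<le> (t::real)"
    have "exp (\<beta> t) * (f (X t) - f xs) \<le> exp (\<beta> 0) * (f (X 0) - f xs)"
      by (rule mono[OF xs t])
    hence "(f (X t) - f xs) \<le> (exp (\<beta> 0) / exp (\<beta> t)) * (f (X 0) - f xs)"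
      by (simp add: field_simps)
    thus "f (X t) - f xs \<le> exp (\<beta> 0 - \<beta> t) * (f (X 0) - f xs)"
      by (simp add: exp_diff)
  qed
qed

end
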